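(* Let $j$ be an integer, $a=2^j$, $b=2^{j+1}$, let $n>1$ be an integer, and let $s_1,\dots,s_n$ and $w_1,\dots,w_n$ be the nodes and weights of the $n$-point Gauss–Legendre quadrature on $[a,b]$. Then for every $\alpha\in(0,1)$ and every $t>0$, $$\left|\int_a^b e^{-ts}s^{\alpha-1}\,ds-\sum_{k=1}^n w_k s_k^{\alpha-1}e^{-s_k t}\right|<2\sqrt{2}\,\pi\, a^{\alpha}\left(\frac{e^{1/e}}{4}\right)^{2n}.$$
   Context: The $n$-point Gauss–Legendre quadrature on $[a,b]$ is the rule $\int_a^b\varphi(s)\,ds\approx\sum_{k=1}^n w_k\varphi(s_k)$ with nodes at the zeros of the degree-$n$ Legendre polynomial mapped to $[a,b]$, exact for all polynomials of degree at most $2n-1$. *)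

theory Defs
  imports "HOL-Analysis.Analysis" "HOL-Computational_Algebra.Polynomial"
begin

fun legendre :: "nat \<Rightarrow> real poly" where
  "legendre 0 = 1"
| "legendre (Suc 0) = [:0, 1:]"
| "legendre (Suc (Suc m)) =
     smult (1 / (real m + 2))
       (smult (2 * real m + 3) ([:0, 1:] * legendre (Suc m)) - smult (real m + 1) (legendre m))"

definition gauss_legendre ::
    "real \<Rightarrow> real \<Rightarrow> nat \<Rightarrow> (nat \<Rightarrow> real) \<Rightarrow> (nat \<Rightarrow> real) \<Rightarrow> bool" where
  "gauss_legendre a b n s w \<longleftrightarrow>
     inj_on s {1..n} \<and>
     (\<forall>k\<in>{1..n}. s k \<in> {a..b} \<and>
        poly (legendre n) ((2 * s k - a - b) / (b - a)) = 0) \<and>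
     (\<forall>p :: real poly. degree p \<le> 2 * n - 1 \<longrightarrow>
        integral {a..b} (poly p) = (\<Sum>k=1..n. w k * poly p (s k)))"

end

theory Submission
  imports Defs
begin


lemma gen_rolle:
  fixes G :: "nat \<Rightarrow> real \<Rightarrow> real" and z :: "nat \<Rightarrow> real"
  assumes "\<And>k y. k < m \<Longrightarrow> y \<in> {a..b} \<Longrightarrow> (G k has_real_derivative G (Suc k) y) (at y)"
    and "\<And>i. i < m \<Longrightarrow> z i < z (Suc i)"
    and "\<And>i. i \<le> m \<Longrightarrow> z i \<in> {a..b}"
    and "\<And>i. i \<le> m \<Longrightarrow> G 0 (z i) = 0"
  shows "\<exists>\<xi>\<in>{a..b}. G m \<xi> = 0"
  using assms
proof (induction m arbitrary: G z)
  case 0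
  then show ?case by force
next
  case (Suc m)
  have "\<forall>i. \<exists>y. i < Suc m \<longrightarrow> z i < y \<and> y < z (Suc i) \<and> G 1 y = 0"
  proof (intro allI)
    fix i
    show "\<exists>y. i < Suc m \<longrightarrow> z i < y \<and> y < z (Suc i) \<and> G 1 y = 0"
    proof (cases "i < Suc m")
      case True
      note i = True
      have zi: "z i \<in> {a..b}" "z (Suc i) \<in> {a..b}" using Suc.prems(3) i by auto
      have D: "\<And>y. y \<in> {z i..z (Suc i)} \<Longrightarrow> (G 0 has_real_derivative G 1 y) (at y)"
        using Suc.prems(1)[of 0] zi by auto
      have "\<exists>y. z i < y \<and> y < z (Suc i) \<and> DERIV (G 0) y :> 0"
      proof (rule Rolle)
        show "z i < z (Suc i)" using Suc.prems(2) i .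
        show "G 0 (z i) = G 0 (z (Suc i))" using Suc.prems(4) i by simp
        show "continuous_on {z i..z (Suc i)} (G 0)"
          using D by (meson DERIV_isCont continuous_at_imp_continuous_on)
        show "G 0 differentiable (at x)" if "z i < x" "x < z (Suc i)" for x
          using D[of x] that real_differentiable_def by force
      qed
      then obtain y where y: "z i < y" "y < z (Suc i)" "DERIV (G 0) y :> 0" by blast
      have "DERIV (G 0) y :> G 1 y" using D[of y] y by auto
      then have "G 1 y = 0" using DERIV_unique y(3) by blast
      then show ?thesis using y by blast
    qed auto
  qed
  then obtain z' where z': "\<And>i. i < Suc m \<Longrightarrow> z i < z' i \<and> z' i < z (Suc i) \<and> G 1 (z' i) = 0"
    by metis
  have "\<exists>\<xi>\<in>{a..b}. (\<lambda>k. G (Suc k)) m \<xi> = 0"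
  proof (rule Suc.IH[of "\<lambda>k. G (Suc k)" z'])
    show "((\<lambda>k. G (Suc k)) k has_real_derivative (\<lambda>k. G (Suc k)) (Suc k) y) (at y)"
      if "k < m" "y \<in> {a..b}" for k y using Suc.prems(1)[of "Suc k" y] that by auto
    show "z' i < z' (Suc i)" if "i < m" for i
      using z'[of i] z'[of "Suc i"] that by force
    show "z' i \<in> {a..b}" if "i \<le> m" for i
      using z'[of i] that Suc.prems(3)[of i] Suc.prems(3)[of "Suc i"] by force
    show "(\<lambda>k. G (Suc k)) 0 (z' i) = 0" if "i \<le> m" for i
      using z'[of i] that by auto
  qed
  then show ?case by simp
qed

lemma gen_rolle_set:
  fixes G :: "nat \<Rightarrow> real \<Rightarrow> real"
  assumes "\<And>k y. k < m \<Longrightarrow> y \<in> {a..b} \<Longrightarrow> (G k has_real_derivative G (Suc k) y) (at y)"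
    and "finite Z" "card Z = Suc m" "Z \<subseteq> {a..b}" "\<And>z. z \<in> Z \<Longrightarrow> G 0 z = 0"
  shows "\<exists>\<xi>\<in>{a..b}. G m \<xi> = 0"
proof -
  define xs where "xs = sorted_list_of_set Z"
  have len: "length xs = Suc m" using assms(2,3) xs_def by simp
  have st: "sorted_wrt (<) xs" using xs_def strict_sorted_list_of_set by blast
  have setx: "set xs = Z" using assms(2) xs_def by simp
  show ?thesis
  proof (rule gen_rolle[where m=m and G=G and a=a and b=b and z="\<lambda>i. xs ! i"])
    show "(G k has_real_derivative G (Suc k) y) (at y)" if "k < m" "y \<in> {a..b}" for k y
      using assms(1) that .
    show "xs ! i < xs ! Suc i" if "i < m" for i
      using st len that by (simp add: sorted_wrt_nth_less)
    show "xs ! i \<in> {a..b}" if "i \<le> m" for i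
      using len that setx assms(4) nth_mem by fastforce
    show "G 0 (xs ! i) = 0" if "i \<le> m" for i
      using len that setx assms(5) nth_mem by fastforce
  qed
qed

lemma binom_shift_sum:
  fixes u v :: "nat \<Rightarrow> real"
  shows "(\<Sum>i\<le>Suc k. real (Suc k choose i) * (u i * v (Suc k - i))) =
    (\<Sum>i\<le>k. real (k choose i) * (u (Suc i) * v (k - i))) + (\<Sum>i\<le>k. real (k choose i) * (u i * v (Suc k - i)))"
proof -
  define h where "h i = real (k choose i) * (u i * v (Suc k - i))" for i
  have "(\<Sum>i\<le>Suc k. real (Suc k choose i) * (u i * v (Suc k - i))) =
     u 0 * v (Suc k) + (\<Sum>i\<le>k. real (Suc k choose Suc i) * (u (Suc i) * v (k - i)))"
    by (subst sum.atMost_Suc_shift) simp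
  also have "\<dots> = u 0 * v (Suc k) + (\<Sum>i\<le>k. real (k choose i) * (u (Suc i) * v (k - i)))
      + (\<Sum>i\<le>k. h (Suc i))"
    by (simp add: h_def sum.distrib algebra_simps)
  also have "(\<Sum>i\<le>k. h (Suc i)) = (\<Sum>i\<le>Suc k. h i) - h 0"
    using sum.atMost_Suc_shift[of h k] by simp
  also have "(\<Sum>i\<le>Suc k. h i) = (\<Sum>i\<le>k. h i)" by (simp add: h_def)
  finally show ?thesis by (simp add: h_def)
qed

lemma leibniz_family:
  fixes U V :: "nat \<Rightarrow> real \<Rightarrow> real"
  assumes "\<And>k. (U k has_real_derivative U (Suc k) x) (at x)"
      "\<And>k. (V k has_real_derivative V (Suc k) x) (at x)"
  shows "((\<lambda>x. \<Sum>i\<le>k. real (k choose i) * (U i x * V (k - i) x)) has_real_derivative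
          (\<Sum>i\<le>Suc k. real (Suc k choose i) * (U i x * V (Suc k - i) x))) (at x)"
proof -
  have "((\<lambda>x. \<Sum>i\<le>k. real (k choose i) * (U i x * V (k - i) x)) has_real_derivative
          (\<Sum>i\<le>k. real (k choose i) * (U i x * V (Suc (k - i)) x + U (Suc i) x * V (k - i) x))) (at x)"
    by (intro DERIV_sum DERIV_cmult DERIV_mult' assms)
  also have "(\<Sum>i\<le>k. real (k choose i) * (U i x * V (Suc (k - i)) x + U (Suc i) x * V (k - i) x))
     = (\<Sum>i\<le>Suc k. real (Suc k choose i) * (U i x * V (Suc k - i) x))"
    using binom_shift_sum[where u="\<lambda>i. U i x" and k=k and v="\<lambda>i. V i x"]
    by (simp add: Suc_diff_le sum.distrib algebra_simps)
  finally show ?thesis .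
qed

lemma exp_partial_le:
  assumes "0 \<le> (x::real)"
  shows "(\<Sum>l\<le>m. x ^ l / fact l) \<le> exp x"
proof -
  have "(\<Sum>l\<le>m. x ^ l / fact l) = (\<Sum>l\<in>{..m}. inverse (fact l) * x ^ l)"
    by (simp add: field_simps)
  also have "\<dots> \<le> (\<Sum>l. inverse (fact l) * x ^ l)"
    by (rule sum_le_suminf[OF summable_exp]) (use assms in auto)
  also have "\<dots> = exp x" by (simp add: exp_def field_simps)
  finally show ?thesis .
qed




fun cheb :: "nat \<Rightarrow> real poly" where
  "cheb 0 = 1"
| "cheb (Suc 0) = [:0, 1:]"
| "cheb (Suc (Suc k)) = smult 2 ([:0, 1:] * cheb (Suc k)) - cheb k"

lemma cheb_cos: "poly (cheb k) (cos \<theta>) = cos (real k * \<theta>)"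
proof (induction k rule: cheb.induct)
  case (3 k)
  have e1: "real (Suc (Suc k)) * \<theta> = real (Suc k) * \<theta> + \<theta>" by (simp add: algebra_simps)
  have e2: "real k * \<theta> = real (Suc k) * \<theta> - \<theta>" by (simp add: algebra_simps)
  have "cos (real (Suc (Suc k)) * \<theta>) = 2 * cos \<theta> * cos (real (Suc k) * \<theta>) - cos (real k * \<theta>)"
    unfolding e1 e2 cos_add cos_diff by (simp add: algebra_simps)
  then show ?case using 3 by simp
qed auto

lemma cheb_deg: "degree (cheb k) \<le> k \<and> coeff (cheb k) k = (if k = 0 then 1 else 2 ^ (k - 1))"
proof (induction k rule: cheb.induct)
  case (3 k)
  have d1: "degree (smult 2 ([:0, 1:] * cheb (Suc k))) \<le> Suc (Suc k)"
    using 3(1) by (simp add: degree_mult_le)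
  have d2: "degree (cheb k) \<le> Suc (Suc k)" using 3(2) by simp
  have "degree (cheb (Suc (Suc k))) \<le> Suc (Suc k)"
    using degree_diff_le[OF d1 d2] by simp
  moreover have "coeff (cheb k) (Suc (Suc k)) = 0" using 3(2) by (simp add: coeff_eq_0)
  ultimately show ?case using 3 by simp
qed auto

lemma cheb_nz: "cheb k \<noteq> 0"
  using cheb_deg[of k] by (cases k) auto

lemma cheb_higher:
  assumes "m \<ge> 1"
  shows "poly ((pderiv ^^ m) (cheb m)) y = 2 ^ (m - 1) * fact m"
proof -
  have "(pderiv ^^ m) (cheb m) = [:2 ^ (m - 1) * fact m:]"
  proof (rule poly_eqI)
    fix n
    show "coeff ((pderiv ^^ m) (cheb m)) n = coeff [:2 ^ (m - 1) * fact m:] n"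
    proof (cases n)
      case 0
      then show ?thesis using assms cheb_deg[of m] by (simp add: coeff_higher_pderiv pochhammer_fact)
    next
      case (Suc n')
      then have "coeff (cheb m) (n + m) = 0" using cheb_deg[of m] by (simp add: coeff_eq_0)
      then show ?thesis using Suc by (simp add: coeff_higher_pderiv)
    qed
  qed
  then show ?thesis by simp
qed

lemma cheb_bound:
  assumes "\<bar>y\<bar> \<le> 1"
  shows "\<bar>poly (cheb m) y\<bar> \<le> 1"
proof -
  have "y = cos (arccos y)" using assms by (simp add: cos_arccos_abs)
  then have "poly (cheb m) y = cos (real m * arccos y)" by (metis cheb_cos)
  then show ?thesis by simp
qed

definition cnode :: "nat \<Rightarrow> nat \<Rightarrow> real" where
  "cnode m i = cos ((2 * real i + 1) * pi / (2 * real m))"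

lemma cnode_root:
  assumes "i < m"
  shows "poly (cheb m) (cnode m i) = 0"
proof -
  have "poly (cheb m) (cnode m i) = cos (real m * ((2 * real i + 1) * pi / (2 * real m)))"
    unfolding cnode_def by (rule cheb_cos)
  also have "real m * ((2 * real i + 1) * pi / (2 * real m)) = real i * pi + pi / 2"
    using assms by (simp add: field_simps)
  also have "cos \<dots> = 0" by (simp add: cos_add)
  finally show ?thesis .
qed

lemma cnode_angle:
  assumes "i < m"
  shows "0 < (2 * real i + 1) * pi / (2 * real m)" "(2 * real i + 1) * pi / (2 * real m) < pi"
proof -
  show "0 < (2 * real i + 1) * pi / (2 * real m)" using assms by simp
  have "2 * real i + 1 < 2 * real m" using assms by linarith
  then have "(2 * real i + 1) * pi < 2 * real m * pi" by simp
  then show "(2 * real i + 1) * pi / (2 * real m) < pi" using assms by (simp add: field_simps)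
qed

lemma cnode_strict:
  assumes "i < j" "j < m"
  shows "cnode m j < cnode m i"
  unfolding cnode_def
proof (rule cos_monotone_0_pi)
  show "0 \<le> (2 * real i + 1) * pi / (2 * real m)" using cnode_angle[of i m] assms by simp
  show "(2 * real j + 1) * pi / (2 * real m) \<le> pi" using cnode_angle[of j m] assms by simp
  have "(2 * real i + 1) * pi < (2 * real j + 1) * pi" using assms by simp
  then show "(2 * real i + 1) * pi / (2 * real m) < (2 * real j + 1) * pi / (2 * real m)"
    using assms by (simp add: divide_strict_right_mono)
qed

lemma cnode_inj: "inj_on (cnode m) {..<m}"
proof (rule inj_onI)
  fix i j assume "i \<in> {..<m}" "j \<in> {..<m}" "cnode m i = cnode m j"
  then show "i = j" using cnode_strict[of i j m] cnode_strict[of j i m]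
    by (metis lessThan_iff linorder_neqE_nat order_less_irrefl)
qed

lemma cnode_abs: "\<bar>cnode m i\<bar> \<le> 1"
  unfolding cnode_def by simp

lemma cheb_roots:
  assumes "poly (cheb m) u = 0"
  shows "u \<in> cnode m ` {..<m}"
proof (rule ccontr)
  assume u: "u \<notin> cnode m ` {..<m}"
  have fin: "finite {x. poly (cheb m) x = 0}" using cheb_nz poly_roots_finite by blast
  have sub: "insert u (cnode m ` {..<m}) \<subseteq> {x. poly (cheb m) x = 0}"
    using assms cnode_root by auto
  have "card (insert u (cnode m ` {..<m})) = Suc m"
    using u cnode_inj by (simp add: card_image)
  then have "Suc m \<le> card {x. poly (cheb m) x = 0}"
    using card_mono[OF fin sub] by simp
  also have "\<dots> \<le> degree (cheb m)" using card_poly_roots_bound[OF cheb_nz] .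
  also have "\<dots> \<le> m" using cheb_deg by blast
  finally show False by simp
qed

definition lbasis :: "(nat \<Rightarrow> real) \<Rightarrow> nat set \<Rightarrow> nat \<Rightarrow> real poly" where
  "lbasis x I i = (\<Prod>j\<in>I - {i}. [:- x j, 1:])"

lemma lbasis_deg: "finite I \<Longrightarrow> i \<in> I \<Longrightarrow> degree (lbasis x I i) \<le> card I - 1"
proof -
  assume fI: "finite I" and iI: "i \<in> I"
  have "degree (lbasis x I i) \<le> (\<Sum>j\<in>I - {i}. degree [:- x j, 1:])"
    unfolding lbasis_def using degree_prod_sum_le[of "I - {i}" "\<lambda>j. [:- x j, 1:]"] fI by (simp add: o_def)
  also have "\<dots> = card (I - {i})" by simp
  also have "\<dots> \<le> card I - 1" using iI fI by (simp add: card_Diff_singleton_if)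
  finally show ?thesis .
qed

lemma lbasis_poly: "poly (lbasis x I i) y = (\<Prod>j\<in>I - {i}. (y - x j))"
  unfolding lbasis_def by (simp add: poly_prod)

lemma lbasis_zero: "finite I \<Longrightarrow> k \<in> I \<Longrightarrow> k \<noteq> i \<Longrightarrow> poly (lbasis x I i) (x k) = 0"
  unfolding lbasis_poly by (rule prod_zero) auto

lemma lbasis_nz: "finite I \<Longrightarrow> inj_on x I \<Longrightarrow> i \<in> I \<Longrightarrow> poly (lbasis x I i) (x i) \<noteq> 0"
  unfolding lbasis_poly by (auto simp: inj_on_def prod_zero_iff)

lemma lagrange_interp:
  fixes x :: "nat \<Rightarrow> real" and f :: "real \<Rightarrow> real"
  assumes "inj_on x {..<m}" "m \<ge> 1"
  shows "\<exists>P. (\<forall>i<m. poly P (x i) = f (x i)) \<and> degree P \<le> m - 1"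
proof -
  define P where "P = (\<Sum>i<m. smult (f (x i) / poly (lbasis x {..<m} i) (x i)) (lbasis x {..<m} i))"
  have "degree P \<le> m - 1"
    unfolding P_def
  proof (rule degree_sum_le)
    fix i assume "i \<in> {..<m}"
    then show "degree (smult (f (x i) / poly (lbasis x {..<m} i) (x i)) (lbasis x {..<m} i)) \<le> m - 1"
      using lbasis_deg[of "{..<m}" i x] degree_smult_le order_trans by fastforce
  qed simp
  moreover have "poly P (x k) = f (x k)" if k: "k < m" for k
  proof -
    have "poly P (x k) = (\<Sum>i<m. f (x i) / poly (lbasis x {..<m} i) (x i) * poly (lbasis x {..<m} i) (x k))"
      unfolding P_def by (simp add: poly_sum)
    also have "\<dots> = f (x k) / poly (lbasis x {..<m} k) (x k) * poly (lbasis x {..<m} k) (x k)"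
      by (subst sum.remove[of _ k]) (use k lbasis_zero in auto)
    also have "\<dots> = f (x k)" using lbasis_nz[OF _ assms(1), of k] k by simp
    finally show ?thesis .
  qed
  ultimately show ?thesis by blast
qed

lemma higher_pderiv_low:
  assumes "degree P \<le> m - 1" "m \<ge> 1"
  shows "(pderiv ^^ m) P = 0"
proof (rule poly_eqI)
  fix n
  have "coeff P (n + m) = 0" using assms by (intro coeff_eq_0) linarith
  then show "coeff ((pderiv ^^ m) P) n = coeff 0 n" by (simp add: coeff_higher_pderiv)
qed




definition D1 :: "real \<Rightarrow> nat \<Rightarrow> real \<Rightarrow> real" where
  "D1 \<alpha> i y = (\<Prod>j<i. \<alpha> - 1 - real j) * y powr (\<alpha> - 1 - real i)"
definition D2 :: "real \<Rightarrow> nat \<Rightarrow> real \<Rightarrow> real" where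
  "D2 t l y = (- t) ^ l * exp (- t * y)"
definition FF :: "real \<Rightarrow> real \<Rightarrow> nat \<Rightarrow> real \<Rightarrow> real" where
  "FF \<alpha> t k = (\<lambda>y. \<Sum>i\<le>k. real (k choose i) * (D1 \<alpha> i y * D2 t (k - i) y))"

lemma D1_deriv:
  assumes "0 < y"
  shows "(D1 \<alpha> i has_real_derivative D1 \<alpha> (Suc i) y) (at y)"
proof -
  have "((\<lambda>y. y powr (\<alpha> - 1 - real i)) has_real_derivative (\<alpha> - 1 - real i) * y powr (\<alpha> - 1 - real i - 1)) (at y)"
    by (rule has_real_derivative_powr[OF assms])
  then have "((\<lambda>y. (\<Prod>j<i. \<alpha> - 1 - real j) * y powr (\<alpha> - 1 - real i)) has_real_derivative
     (\<Prod>j<i. \<alpha> - 1 - real j) * ((\<alpha> - 1 - real i) * y powr (\<alpha> - 1 - real i - 1))) (at y)"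
    by (rule DERIV_cmult)
  moreover have "\<alpha> - 1 - real i - 1 = \<alpha> - 1 - real (Suc i)" by simp
  ultimately show ?thesis unfolding D1_def by (simp add: prod.lessThan_Suc algebra_simps)
qed

lemma D2_deriv: "(D2 t l has_real_derivative D2 t (Suc l) y) (at y)"
  unfolding D2_def by (auto intro!: derivative_eq_intros)

lemma FF_deriv:
  assumes "0 < y"
  shows "(FF \<alpha> t k has_real_derivative FF \<alpha> t (Suc k) y) (at y)"
  unfolding FF_def
  by (rule leibniz_family[where U="D1 \<alpha>" and V="D2 t"]) (use D1_deriv D2_deriv assms in auto)

lemma FF0: "FF \<alpha> t 0 y = exp (- t * y) * y powr (\<alpha> - 1)"
  unfolding FF_def D1_def D2_def by simp

lemma fact_prod_Suc_real: "(\<Prod>j<i. real (Suc j)) = fact i"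
  by (induction i) (simp_all add: prod.lessThan_Suc)

lemma aux_fact_term:
  fixes P A t E :: real
  shows "fact m / (fact i * fact k) * ((fact i * (P * A ^ k)) * (t ^ k * E)) = fact m * P * E * ((t * A) ^ k / fact k)"
proof -
  have "fact i \<noteq> (0::real)" "fact k \<noteq> (0::real)" by simp_all
  then show ?thesis by (simp add: power_mult_distrib divide_simps)
qed

lemma FF_bound:
  assumes "0 < A" "A \<le> y" "0 < t" "0 < \<alpha>" "\<alpha> < 1"
  shows "\<bar>FF \<alpha> t m y\<bar> \<le> fact m * A powr (\<alpha> - 1 - real m)"
proof -
  have b1: "\<bar>D1 \<alpha> i y\<bar> \<le> fact i * A powr (\<alpha> - 1 - real i)" for i
  proof -
    have "\<bar>\<Prod>j<i. \<alpha> - 1 - real j\<bar> = (\<Prod>j<i. \<bar>\<alpha> - 1 - real j\<bar>)" by (simp add: abs_prod)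
    also have "\<dots> \<le> (\<Prod>j<i. real (Suc j))"
      by (rule prod_mono) (use assms in auto)
    also have "\<dots> = fact i" by (rule fact_prod_Suc_real)
    finally have p: "\<bar>\<Prod>j<i. \<alpha> - 1 - real j\<bar> \<le> fact i" .
    have q: "y powr (\<alpha> - 1 - real i) \<le> A powr (\<alpha> - 1 - real i)"
      by (rule powr_mono2') (use assms in auto)
    show ?thesis unfolding D1_def abs_mult
      using mult_mono[OF p q] assms by simp
  qed
  have b2: "\<bar>D2 t l y\<bar> \<le> t ^ l * exp (- t * A)" for l
    unfolding D2_def abs_mult using assms by (simp add: power_abs mult_left_mono)
  have "\<bar>FF \<alpha> t m y\<bar> \<le> (\<Sum>i\<le>m. real (m choose i) * (\<bar>D1 \<alpha> i y\<bar> * \<bar>D2 t (m - i) y\<bar>))"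
    unfolding FF_def by (rule order_trans[OF sum_abs]) (simp add: abs_mult)
  also have "\<dots> \<le> (\<Sum>i\<le>m. real (m choose i) * ((fact i * A powr (\<alpha> - 1 - real i)) * (t ^ (m - i) * exp (- t * A))))"
  proof (rule sum_mono)
    fix i assume "i \<in> {..m}"
    have "0 \<le> fact i * A powr (\<alpha> - 1 - real i)" by simp
    then show "real (m choose i) * (\<bar>D1 \<alpha> i y\<bar> * \<bar>D2 t (m - i) y\<bar>) \<le> real (m choose i) * ((fact i * A powr (\<alpha> - 1 - real i)) * (t ^ (m - i) * exp (- t * A)))"
      by (intro mult_left_mono[OF mult_mono[OF b1 b2]]) auto
  qed
  also have "\<dots> = (\<Sum>i\<le>m. fact m * A powr (\<alpha> - 1 - real m) * exp (- t * A) * ((t * A) ^ (m - i) / fact (m - i)))"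
  proof (rule sum.cong)
    fix i assume "i \<in> {..m}"
    then have im: "i \<le> m" by simp
    have pw: "A powr (\<alpha> - 1 - real i) = A powr (\<alpha> - 1 - real m) * A ^ (m - i)"
    proof -
      have "\<alpha> - 1 - real i = (\<alpha> - 1 - real m) + real (m - i)"
        using im by (simp add: of_nat_diff)
      then have "A powr (\<alpha> - 1 - real i) = A powr ((\<alpha> - 1 - real m) + real (m - i))"
        by (rule arg_cong)
      also have "\<dots> = A powr (\<alpha> - 1 - real m) * A ^ (m - i)"
        using assms by (simp add: powr_add powr_realpow)
      finally show ?thesis .
    qed
    show "real (m choose i) * ((fact i * A powr (\<alpha> - 1 - real i)) * (t ^ (m - i) * exp (- t * A))) =
       fact m * A powr (\<alpha> - 1 - real m) * exp (- t * A) * ((t * A) ^ (m - i) / fact (m - i))"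
      unfolding pw binomial_fact[OF im] by (rule aux_fact_term)
  qed simp
  also have "\<dots> = fact m * A powr (\<alpha> - 1 - real m) * exp (- t * A) * (\<Sum>i\<le>m. (t * A) ^ (m - i) / fact (m - i))"
    by (simp add: sum_distrib_left)
  also have "(\<Sum>i\<le>m. (t * A) ^ (m - i) / fact (m - i)) = (\<Sum>l\<le>m. (t * A) ^ l / fact l)"
  proof -
    have "(\<Sum>i<Suc m. (t * A) ^ (Suc m - Suc i) / fact (Suc m - Suc i)) = (\<Sum>l<Suc m. (t * A) ^ l / fact l)"
      by (rule sum.nat_diff_reindex)
    then show ?thesis by (simp add: lessThan_Suc_atMost)
  qed
  also have "fact m * A powr (\<alpha> - 1 - real m) * exp (- t * A) * (\<Sum>l\<le>m. (t * A) ^ l / fact l)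
     \<le> fact m * A powr (\<alpha> - 1 - real m) * exp (- t * A) * exp (t * A)"
    by (rule mult_left_mono[OF exp_partial_le]) (use assms in auto)
  also have "\<dots> = fact m * A powr (\<alpha> - 1 - real m) * (exp (t * A) * exp (- (t * A)))"
    by (simp only: mult.assoc mult.commute mult_minus_left mult_minus_right)
  also have "\<dots> = fact m * A powr (\<alpha> - 1 - real m)" by (simp only: exp_minus_inverse mult_1_right)
  finally show ?thesis .
qed




lemma poly_affine_deriv:
  assumes "h \<noteq> 0"
  shows "((\<lambda>y. poly Q ((y - c) / h) / h ^ k) has_real_derivative poly (pderiv Q) ((y - c) / h) / h ^ Suc k) (at y)"
proof -
  have "((\<lambda>y. (y - c) / h) has_real_derivative 1 / h) (at y)"
    using assms by (auto intro!: derivative_eq_intros)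
  from DERIV_chain2[OF poly_DERIV this]
  have "((\<lambda>y. poly Q ((y - c) / h)) has_real_derivative poly (pderiv Q) ((y - c) / h) * (1 / h)) (at y)" .
  from DERIV_cdivide[OF this, of "h ^ k"]
  show ?thesis using assms by (simp add: field_simps)
qed

lemma interp_error:
  assumes A: "0 < A" and t: "0 < t" and al: "0 < \<alpha>" "\<alpha> < 1" and m: "m \<ge> 1"
  shows "\<exists>P. degree P \<le> m - 1 \<and> (\<forall>x\<in>{A..2*A}. \<bar>FF \<alpha> t 0 x - poly P x\<bar> \<le> 2 * A powr (\<alpha> - 1) / 4 ^ m)"
proof -
  define c where "c = 3 * A / 2"
  define h where "h = A / 2"
  have h0: "0 < h" using A h_def by simp
  define xn where "xn i = c + h * cnode m i" for i
  have inj: "inj_on xn {..<m}" using cnode_inj[of m] h0 unfolding xn_def inj_on_def by auto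
  have aff_in: "c + h * y \<in> {A..2*A}" if "\<bar>y\<bar> \<le> 1" for y
  proof -
    have "\<bar>h * y\<bar> \<le> h" using that h0 by (simp add: abs_mult mult_left_le)
    then show ?thesis unfolding c_def h_def by (auto simp: abs_le_iff)
  qed
  have xn_in: "xn i \<in> {A..2*A}" for i
    unfolding xn_def by (rule aff_in[OF cnode_abs])
  obtain P where P: "\<forall>i<m. poly P (xn i) = FF \<alpha> t 0 (xn i)" "degree P \<le> m - 1"
    using lagrange_interp[OF inj m, of "FF \<alpha> t 0"] by blast
  have hP: "(pderiv ^^ m) P = 0" using higher_pderiv_low[OF P(2) m] .
  have "\<bar>FF \<alpha> t 0 x - poly P x\<bar> \<le> 2 * A powr (\<alpha> - 1) / 4 ^ m" if x: "x \<in> {A..2*A}" for x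
  proof (cases "x \<in> xn ` {..<m}")
    case True
    then obtain i where "i < m" "x = xn i" by auto
    then show ?thesis using P(1) by simp
  next
    case False
    define u where "u = (x - c) / h"
    have xu: "x = c + h * u" using h0 u_def by simp
    have unz: "poly (cheb m) u \<noteq> 0"
    proof
      assume "poly (cheb m) u = 0"
      then obtain i where i: "i < m" "u = cnode m i" using cheb_roots by blast
      then have "x = xn i" using xu xn_def by simp
      then show False using False i by auto
    qed
    have uabs: "\<bar>u\<bar> \<le> 1"
    proof -
      have "- h \<le> x - c \<and> x - c \<le> h" using x unfolding c_def h_def by auto
      then have "\<bar>x - c\<bar> \<le> h" by (simp add: abs_le_iff)
      then show ?thesis using h0 unfolding u_def by (simp add: abs_div)
    qed
    define K where "K = (FF \<alpha> t 0 x - poly P x) / poly (cheb m) u"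
    define G where "G = (\<lambda>k y. FF \<alpha> t k y - poly ((pderiv ^^ k) P) y
        - K * (poly ((pderiv ^^ k) (cheb m)) ((y - c) / h) / h ^ k))"
    have Gd: "(G k has_real_derivative G (Suc k) y) (at y)" if "k < m" "y \<in> {A..2*A}" for k y
    proof -
      have y0: "0 < y" using that A by auto
      have d1: "((\<lambda>y. poly ((pderiv ^^ k) (cheb m)) ((y - c) / h) / h ^ k) has_real_derivative
          poly ((pderiv ^^ Suc k) (cheb m)) ((y - c) / h) / h ^ Suc k) (at y)"
        using poly_affine_deriv[of h "(pderiv ^^ k) (cheb m)" c k y] h0 by simp
      have d2: "((\<lambda>y. poly ((pderiv ^^ k) P) y) has_real_derivative poly ((pderiv ^^ Suc k) P) y) (at y)"
        using poly_DERIV[of "(pderiv ^^ k) P" y] by simp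
      show ?thesis unfolding G_def
        by (intro DERIV_diff DERIV_cmult FF_deriv[OF y0] d1 d2)
    qed
    define Z where "Z = insert x (xn ` {..<m})"
    have Zf: "finite Z" unfolding Z_def by simp
    have Zc: "card Z = Suc m" unfolding Z_def using False inj by (simp add: card_image)
    have Zs: "Z \<subseteq> {A..2*A}" unfolding Z_def using x xn_in by auto
    have Gz: "G 0 z = 0" if zZ: "z \<in> Z" for z
    proof (cases "z = x")
      case True
      then show ?thesis unfolding G_def K_def using unz u_def by simp
    next
      case False
      then obtain i where i: "i < m" "z = xn i" using zZ Z_def by auto
      have "(z - c) / h = cnode m i" using i h0 xn_def by simp
      then show ?thesis unfolding G_def using P(1) i cnode_root[OF i(1)] by simp
    qed
    obtain \<xi> where xi: "\<xi> \<in> {A..2*A}" "G m \<xi> = 0"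
      using gen_rolle_set[where m=m and G=G and a=A and b="2*A" and Z=Z, OF Gd Zf Zc Zs Gz] by blast
    have "FF \<alpha> t m \<xi> = K * (2 ^ (m - 1) * fact m / h ^ m)"
      using xi(2) hP cheb_higher[OF m] unfolding G_def by simp
    then have Kv: "K = FF \<alpha> t m \<xi> * h ^ m / (2 ^ (m - 1) * fact m)"
      using h0 by (simp add: field_simps)
    have "FF \<alpha> t 0 x - poly P x = K * poly (cheb m) u" unfolding K_def using unz by simp
    then have "\<bar>FF \<alpha> t 0 x - poly P x\<bar> \<le> \<bar>K\<bar>"
      using cheb_bound[OF uabs, of m] by (simp add: abs_mult mult_left_le)
    also have "\<bar>K\<bar> = \<bar>FF \<alpha> t m \<xi>\<bar> * h ^ m / (2 ^ (m - 1) * fact m)"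
      unfolding Kv using h0 by (simp add: abs_mult)
    also have "\<dots> \<le> fact m * A powr (\<alpha> - 1 - real m) * h ^ m / (2 ^ (m - 1) * fact m)"
      by (intro divide_right_mono mult_right_mono FF_bound) (use A t al xi h0 in auto)
    also have "\<dots> = 2 * A powr (\<alpha> - 1) / 4 ^ m"
    proof -
      have e1: "A powr (\<alpha> - 1) = A powr (\<alpha> - 1 - real m) * A ^ m"
        using A by (simp add: powr_diff powr_realpow)
      have e2: "(4::real) ^ m = 2 ^ (m - 1) * 2 ^ m * 2"
        using m
      proof (cases m)
        case (Suc k)
        have "(4::real) ^ k = 2 ^ k * 2 ^ k" by (simp add: power_mult_distrib[symmetric])
        then show ?thesis using Suc by simp
      qed simp
      show ?thesis unfolding e1 e2 h_def by (simp add: power_divide field_simps)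
    qed
    finally show ?thesis .
  qed
  then show ?thesis using P(2) by blast
qed

lemma gl_weights:
  assumes gl: "gauss_legendre a b n s w" and ab: "a < b" and n: "n \<ge> 1"
  shows "\<And>k. k \<in> {1..n} \<Longrightarrow> 0 \<le> w k" and "(\<Sum>k=1..n. w k) = b - a"
proof -
  have inj: "inj_on s {1..n}" and ex: "\<And>p. degree p \<le> 2 * n - 1 \<Longrightarrow> integral {a..b} (poly p) = (\<Sum>k=1..n. w k * poly p (s k))"
    using gl unfolding gauss_legendre_def by auto
  have "integral {a..b} (poly 1) = (\<Sum>k=1..n. w k * poly 1 (s k))" by (rule ex) simp
  moreover have "poly 1 = (\<lambda>x::real. 1)" by (rule ext) simp
  ultimately show "(\<Sum>k=1..n. w k) = b - a" using ab by simp
  fix k assume k: "k \<in> {1..n}"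
  define p where "p = (lbasis s {1..n} k) ^ 2"
  have "degree p \<le> 2 * n - 1"
  proof -
    have "degree p \<le> 2 * degree (lbasis s {1..n} k)" unfolding p_def
      by (metis degree_power_le mult.commute)
    also have "\<dots> \<le> 2 * (n - 1)" using lbasis_deg[of "{1..n}" k s] k by simp
    finally show ?thesis by simp
  qed
  then have e: "integral {a..b} (poly p) = (\<Sum>j=1..n. w j * poly p (s j))" by (rule ex)
  have "(\<Sum>j=1..n. w j * poly p (s j)) = w k * poly p (s k)"
    by (subst sum.remove[of _ k]) (use k lbasis_zero in \<open>auto simp: p_def\<close>)
  moreover have "0 \<le> integral {a..b} (poly p)"
    by (rule integral_nonneg) (auto simp: p_def intro!: integrable_continuous_interval continuous_intros)
  moreover have "0 < poly p (s k)"
    using lbasis_nz[of "{1..n}" s k] inj k unfolding p_def by simp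
  ultimately show "0 \<le> w k" using e by (metis zero_le_mult_iff not_le)
qed




theorem lemma6:
  fixes j :: int and n :: nat and s w :: "nat \<Rightarrow> real" and \<alpha> t :: real
  assumes "n > 1"
    and "gauss_legendre (2 powr real_of_int j) (2 powr real_of_int (j + 1)) n s w"
    and "0 < \<alpha>" and "\<alpha> < 1" and "0 < t"
  shows "\<bar>integral {2 powr real_of_int j .. 2 powr real_of_int (j + 1)}
            (\<lambda>x. exp (- t * x) * x powr (\<alpha> - 1))
          - (\<Sum>k=1..n. w k * s k powr (\<alpha> - 1) * exp (- s k * t))\<bar>
         < 2 * sqrt 2 * pi * (2 powr real_of_int j) powr \<alpha> * (exp (1 / exp 1) / 4) ^ (2 * n)"
proof -
  define A where "A = 2 powr real_of_int j"
  have A0: "0 < A" unfolding A_def by simp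
  have B: "2 powr real_of_int (j + 1) = 2 * A" unfolding A_def by (simp add: powr_add)
  define f where "f = FF \<alpha> t 0"
  have fx: "\<And>y. exp (- t * y) * y powr (\<alpha> - 1) = f y" unfolding f_def by (simp add: FF0)
  have gl: "gauss_legendre A (2 * A) n s w" using assms(2) B A_def by simp
  have n1: "n \<ge> 1" using assms(1) by simp
  have sin: "\<And>k. k \<in> {1..n} \<Longrightarrow> s k \<in> {A..2*A}"
    and ex: "\<And>p. degree p \<le> 2 * n - 1 \<Longrightarrow> integral {A..2*A} (poly p) = (\<Sum>k=1..n. w k * poly p (s k))"
    using gl unfolding gauss_legendre_def by auto
  have wpos: "\<And>k. k \<in> {1..n} \<Longrightarrow> 0 \<le> w k" and wsum: "(\<Sum>k=1..n. w k) = 2 * A - A"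
    using gl_weights[OF gl _ n1] A0 by auto
  define \<epsilon> where "\<epsilon> = 2 * A powr (\<alpha> - 1) / 4 ^ (2 * n)"
  obtain P where P: "degree P \<le> 2 * n - 1" "\<And>x. x \<in> {A..2*A} \<Longrightarrow> \<bar>f x - poly P x\<bar> \<le> \<epsilon>"
    using interp_error[OF A0 assms(5) assms(3) assms(4), of "2 * n"] n1 unfolding f_def \<epsilon>_def by auto
  have contf: "continuous_on {A..2*A} f"
  proof (rule continuous_at_imp_continuous_on, intro ballI)
    fix x assume "x \<in> {A..2*A}"
    then have "0 < x" using A0 by auto
    then show "isCont f x" unfolding f_def using FF_deriv DERIV_isCont by blast
  qed
  have contP: "continuous_on {A..2*A} (poly P)" by (intro continuous_intros)
  have contd: "continuous_on {A..2*A} (\<lambda>x. f x - poly P x)" using contf contP by (intro continuous_intros)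
  have intf: "f integrable_on {A..2*A}" using contf by (rule integrable_continuous_interval)
  have intP: "poly P integrable_on {A..2*A}" using contP by (rule integrable_continuous_interval)
  have lhs1: "integral {A..2*A} (\<lambda>x. exp (- t * x) * x powr (\<alpha> - 1)) = integral {A..2*A} f"
    using fx by simp
  have lhs2: "(\<Sum>k=1..n. w k * s k powr (\<alpha> - 1) * exp (- s k * t)) = (\<Sum>k=1..n. w k * f (s k))"
    by (rule sum.cong) (auto simp: fx[symmetric] algebra_simps)
  have E: "integral {A..2*A} f - (\<Sum>k=1..n. w k * f (s k)) =
      integral {A..2*A} (\<lambda>x. f x - poly P x) - (\<Sum>k=1..n. w k * (f (s k) - poly P (s k)))"
    using integral_diff[OF intf intP] ex[OF P(1)] by (simp add: algebra_simps sum_subtractf)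
  have b1: "\<bar>integral {A..2*A} (\<lambda>x. f x - poly P x)\<bar> \<le> \<epsilon> * (2 * A - A)"
    using integral_bound[of A "2*A" "\<lambda>x. f x - poly P x" \<epsilon>] contd P(2) A0 by auto
  have b2: "\<bar>\<Sum>k=1..n. w k * (f (s k) - poly P (s k))\<bar> \<le> (\<Sum>k=1..n. w k) * \<epsilon>"
  proof -
    have "\<bar>\<Sum>k=1..n. w k * (f (s k) - poly P (s k))\<bar> \<le> (\<Sum>k=1..n. \<bar>w k * (f (s k) - poly P (s k))\<bar>)"
      by (rule sum_abs)
    also have "\<dots> \<le> (\<Sum>k=1..n. w k * \<epsilon>)"
    proof (rule sum_mono)
      fix k assume k: "k \<in> {1..n}"
      show "\<bar>w k * (f (s k) - poly P (s k))\<bar> \<le> w k * \<epsilon>"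
        using wpos[OF k] P(2)[OF sin[OF k]] by (simp add: abs_mult mult_left_mono)
    qed
    finally show ?thesis by (simp add: sum_distrib_right)
  qed
  have "\<bar>integral {A..2*A} f - (\<Sum>k=1..n. w k * f (s k))\<bar> \<le> 2 * A * \<epsilon>"
  proof -
    have "\<bar>integral {A..2*A} (\<lambda>x. f x - poly P x) - (\<Sum>k=1..n. w k * (f (s k) - poly P (s k)))\<bar>
       \<le> \<bar>integral {A..2*A} (\<lambda>x. f x - poly P x)\<bar> + \<bar>\<Sum>k=1..n. w k * (f (s k) - poly P (s k))\<bar>"
      by (rule abs_triangle_ineq4)
    then show ?thesis using b1 b2 wsum unfolding E by (simp add: algebra_simps)
  qed
  also have "2 * A * \<epsilon> = 4 * A powr \<alpha> / 4 ^ (2 * n)"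
  proof -
    have "A * A powr (\<alpha> - 1) = A powr \<alpha>" using A0 by (simp add: powr_diff)
    then show ?thesis unfolding \<epsilon>_def by (simp add: field_simps)
  qed
  also have "\<dots> < 2 * sqrt 2 * pi * A powr \<alpha> * (exp (1 / exp 1) / 4) ^ (2 * n)"
  proof -
    have "(1 / 4::real) ^ (2 * n) \<le> (exp (1 / exp 1) / 4) ^ (2 * n)"
      by (intro power_mono) auto
    then have p: "1 / (4::real) ^ (2 * n) \<le> (exp (1 / exp 1) / 4) ^ (2 * n)" by (simp add: power_divide)
    have s2: "1 < sqrt 2" by simp
    have "2 * 1 * 3 < 2 * sqrt 2 * pi"
      by (rule mult_strict_mono) (use s2 pi_gt3 in auto)
    then have c4: "4 < 2 * sqrt 2 * pi" by simp
    define Q where "Q = A powr \<alpha> / 4 ^ (2 * n)"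
    have Q0: "0 < Q" using A0 unfolding Q_def by simp
    have "4 * Q < 2 * sqrt 2 * pi * Q" using mult_strict_right_mono[OF c4 Q0] .
    also have "Q \<le> A powr \<alpha> * (exp (1 / exp 1) / 4) ^ (2 * n)"
    proof -
      have "Q = A powr \<alpha> * (1 / (4::real) ^ (2 * n))" unfolding Q_def by simp
      also have "\<dots> \<le> A powr \<alpha> * (exp (1 / exp 1) / 4) ^ (2 * n)"
        by (rule mult_left_mono[OF p]) simp
      finally show ?thesis .
    qed
    then have "2 * sqrt 2 * pi * Q \<le> 2 * sqrt 2 * pi * (A powr \<alpha> * (exp (1 / exp 1) / 4) ^ (2 * n))"
      by (rule mult_left_mono) simp
    finally show ?thesis unfolding Q_def by (simp add: mult.assoc)
  qed
  finally have fin: "\<bar>integral {A..2*A} f - (\<Sum>k=1..n. w k * f (s k))\<bar>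
      < 2 * sqrt 2 * pi * A powr \<alpha> * (exp (1 / exp 1) / 4) ^ (2 * n)" .
  show ?thesis unfolding B A_def[symmetric] lhs1 lhs2 using fin .
qed


end
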